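(* Let $\{\lambda_{-n}\}_{n\in\mathbb{J}}$ be a family of Witt vectors $\lambda_{-n}=(\lambda_{-n,0},\lambda_{-n,1},\dots)\in\mathbf{W}(\mathcal{O}_K)$, and let $(\phi_{-n,0},\phi_{-n,1},\dots)$ be the phantom vector of $\lambda_{-n}$. The formal series $$g^-(T):=\sum_{n\in\mathbb{J}}\sum_{m\ge0}-n\,\phi_{-n,m}\,T^{-np^m}$$ belongs to $\mathcal{E}_K$ if and only if $|\lambda_{-n,m}|<1$ for all $n\in\mathbb{J}$ and all $m\ge0$, and $\lim_{n\in\mathbb{J},\,n\to\infty}\lambda_{-n,m}=0$ for all $m\ge0$.
   Context: $K$ is a field of characteristic $0$, complete for a non-archimedean absolute value, residue field of characteristic $p>0$; $\mathcal{O}_K=\{|x|\le1\}$. $\mathcal{E}_K$ is the ring of Laurent series $\sum_{i\in\mathbb{Z}}a_iT^i$ over $K$ with $\sup|a_i|<\infty$ and $|a_i|\to0$ as $i\to-\infty$. $\mathbb{J}=\{n\in\mathbb{Z}:n\ge1,\ p\nmid n\}$. $\mathbf{W}(\mathcal{O}_K)$ is the ring of $p$-typical Witt vectors with entries in $\mathcal{O}_K$; the phantom vector of $\lambda=(\lambda_0,\lambda_1,\dots)$ is $(\phi_0,\phi_1,\ldots)$, $\phi_m=\sum_{i=0}^mp^i\lambda_i^{p^{m-i}}$. *)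

theory Defs
  imports Complex_Main "HOL-Computational_Algebra.Primes"
begin

text \<open>A field K of characteristic 0 (type class field_char_0) with a non-archimedean
absolute value av, complete for av, whose residue field O_K/m_K has characteristic
the prime p (equivalently |p| < 1).\<close>

definition nonarch_abs :: "('a::field_char_0 \<Rightarrow> real) \<Rightarrow> bool" where
  "nonarch_abs av \<longleftrightarrow>
     (\<forall>x. 0 \<le> av x) \<and> (\<forall>x. av x = 0 \<longleftrightarrow> x = 0) \<and>
     (\<forall>x y. av (x * y) = av x * av y) \<and>
     (\<forall>x y. av (x + y) \<le> max (av x) (av y))"

definition av_complete :: "('a::field_char_0 \<Rightarrow> real) \<Rightarrow> bool" where
  "av_complete av \<longleftrightarrow>
     (\<forall>X::nat \<Rightarrow> 'a. (\<forall>e>0. \<exists>N. \<forall>m\<ge>N. \<forall>n\<ge>N. av (X m - X n) < e) \<longrightarrow>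
        (\<exists>L. \<forall>e>0. \<exists>N. \<forall>n\<ge>N. av (X n - L) < e))"

definition valued_field_setup :: "('a::field_char_0 \<Rightarrow> real) \<Rightarrow> nat \<Rightarrow> bool" where
  "valued_field_setup av p \<longleftrightarrow>
     nonarch_abs av \<and> av_complete av \<and> prime p \<and> av (of_nat p) < 1"

definition E_K :: "('a::field_char_0 \<Rightarrow> real) \<Rightarrow> (int \<Rightarrow> 'a) set" where
  "E_K av = {a. bdd_above (range (\<lambda>i. av (a i))) \<and>
               (\<forall>e>0. \<exists>N. \<forall>i. i \<le> N \<longrightarrow> av (a i) < e)}"

definition J :: "nat \<Rightarrow> nat set" where
  "J p = {n. 1 \<le> n \<and> \<not> p dvd n}"

text \<open>Witt vectors with entries in O_K: sequences with all entries of absolute value at most 1.\<close>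

definition witt_OK :: "('a::field_char_0 \<Rightarrow> real) \<Rightarrow> (nat \<Rightarrow> 'a) set" where
  "witt_OK av = {l. \<forall>i. av (l i) \<le> 1}"

definition phantom :: "nat \<Rightarrow> (nat \<Rightarrow> 'a::field_char_0) \<Rightarrow> nat \<Rightarrow> 'a" where
  "phantom p l m = (\<Sum>i\<le>m. of_nat (p ^ i) * l i ^ (p ^ (m - i)))"

text \<open>Coefficient of T^i in g^-(T) = sum_{n in J} sum_{m>=0} -n phi_{-n,m} T^{-n p^m};
lam n is the Witt vector lambda_{-n}.\<close>

definition g_minus :: "nat \<Rightarrow> (nat \<Rightarrow> nat \<Rightarrow> 'a::field_char_0) \<Rightarrow> int \<Rightarrow> 'a" where
  "g_minus p lam i =
     (\<Sum>(n, m) \<in> {(n, m). n \<in> J p \<and> int (n * p ^ m) = - i}.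
        - (of_nat n) * phantom p (lam n) m)"

end

theory Submission
  imports Defs
begin

lemma na_nonneg: "nonarch_abs av \<Longrightarrow> 0 \<le> av x"
  by (simp add: nonarch_abs_def)
lemma na_mult: "nonarch_abs av \<Longrightarrow> av (x * y) = av x * av y"
  by (simp add: nonarch_abs_def)
lemma na_add: "nonarch_abs av \<Longrightarrow> av (x + y) \<le> max (av x) (av y)"
  by (simp add: nonarch_abs_def)
lemma na_eq0: "nonarch_abs av \<Longrightarrow> av x = 0 \<longleftrightarrow> x = 0"
  by (simp add: nonarch_abs_def)
lemma na_one: assumes "nonarch_abs av" shows "av 1 = 1"
proof -
  have "av 1 = av 1 * av 1" using na_mult[OF assms, of 1 1] by simp
  moreover have "av 1 \<noteq> 0" using na_eq0[OF assms, of 1] by simp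
  ultimately show ?thesis by (metis mult_cancel_left1)
qed
lemma na_power: assumes "nonarch_abs av" shows "av (x ^ k) = av x ^ k"
  by (induction k) (simp_all add: na_one[OF assms] na_mult[OF assms])
lemma na_minus: assumes "nonarch_abs av" shows "av (- x) = av x"
proof -
  have "av (-1) * av (-1) = 1" using na_mult[OF assms, of "-1" "-1"] na_one[OF assms] by simp
  moreover have "av (-1) \<ge> 0" using na_nonneg[OF assms] .
  ultimately have "av (-1) = 1"
    using power2_eq_1_iff[of "av (-1)"] by (auto simp: power2_eq_square)
  then show ?thesis using na_mult[OF assms, of "-1" x] by simp
qed
lemma na_diff: assumes "nonarch_abs av" shows "av (x - y) \<le> max (av x) (av y)"
  using na_add[OF assms, of x "-y"] na_minus[OF assms, of y] by simp
lemma na_add_eq: assumes "nonarch_abs av" "av y < av x" shows "av (x + y) = av x"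
proof -
  have a: "av (x + y) \<le> av x" using na_add[OF assms(1), of x y] assms(2) by simp
  have "av x \<le> max (av (x + y)) (av y)" using na_diff[OF assms(1), of "x+y" y] by simp
  then have "av x \<le> av (x + y)" using assms(2) by linarith
  with a show ?thesis by simp
qed
lemma na_sum_le: assumes "nonarch_abs av" "finite S" "0 \<le> c" "\<forall>i\<in>S. av (f i) \<le> c"
  shows "av (sum f S) \<le> c"
  using assms(2,4)
proof (induction S rule: finite_induct)
  case empty then show ?case using assms(3) na_eq0[OF assms(1), of 0] by simp
next
  case (insert x F)
  have "av (f x + sum f F) \<le> max (av (f x)) (av (sum f F))" using na_add[OF assms(1)] .
  then show ?case using insert by (simp add: max_def split: if_splits)
qed
lemma na_sum_less: assumes "nonarch_abs av" "finite S" "0 < c" "\<forall>i\<in>S. av (f i) < c"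
  shows "av (sum f S) < c"
  using assms(2,4)
proof (induction S rule: finite_induct)
  case empty then show ?case using assms(3) na_eq0[OF assms(1), of 0] by simp
next
  case (insert x F)
  have "av (f x + sum f F) \<le> max (av (f x)) (av (sum f F))" using na_add[OF assms(1)] .
  then show ?case using insert by (simp add: max_def split: if_splits)
qed
lemma na_of_nat: assumes "nonarch_abs av" shows "av (of_nat n) \<le> 1"
proof (induction n)
  case 0 then show ?case using na_eq0[OF assms, of 0] by simp
next
  case (Suc n)
  then show ?case using na_add[OF assms, of 1 "of_nat n"] na_one[OF assms] by simp
qed
lemma na_of_int: assumes "nonarch_abs av" shows "av (of_int k) \<le> 1"
proof (cases "k \<ge> 0")
  case True
  then have "of_int k = (of_nat (nat k) :: 'a)" by simp
  then show ?thesis using na_of_nat[OF assms] by metis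
next
  case False
  then have "of_int k = - (of_nat (nat (-k)) :: 'a)" by simp
  then show ?thesis using na_of_nat[OF assms] na_minus[OF assms] by metis
qed
lemma na_coprime: assumes "valued_field_setup av p" "\<not> p dvd n"
  shows "av (of_nat n :: 'a::field_char_0) = 1"
proof -
  have na: "nonarch_abs av" and pr: "prime p" and ap: "av (of_nat p :: 'a) < 1"
    using assms(1) by (auto simp: valued_field_setup_def)
  have "coprime p n" using prime_imp_coprime_nat[OF pr assms(2)] .
  then have "gcd (int n) (int p) = 1" by (simp add: coprime_commute gcd_int_def)
  then obtain u v where uv: "u * int n + v * int p = 1" using bezout_int by metis
  then have "(1::'a) = of_int u * of_nat n + of_int v * of_nat p"
    by (metis of_int_1 of_int_add of_int_mult of_int_of_nat_eq)
  then have "av (1::'a) \<le> max (av (of_int u * of_nat n)) (av (of_int v * of_nat p))"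
    using na_add[OF na] by metis
  moreover have "av (of_int u * (of_nat n::'a)) \<le> av (of_nat n)"
    unfolding na_mult[OF na]
    by (rule mult_left_le_one_le[OF na_nonneg[OF na] na_nonneg[OF na] na_of_int[OF na]])
  moreover have "av (of_int v * (of_nat p::'a)) < 1"
    unfolding na_mult[OF na]
    using mult_left_le_one_le[OF na_nonneg[OF na] na_nonneg[OF na] na_of_int[OF na, of v], of "of_nat p"] ap
    by linarith
  ultimately have "1 \<le> av (of_nat n :: 'a)" using na_one[OF na] by linarith
  then show ?thesis using na_of_nat[OF na, of n] by simp
qed


lemma decomp_unique:
  assumes pr: "prime p" and n: "n \<in> J p" and n': "n' \<in> J p"
    and eq: "n * p ^ m = n' * p ^ m'"
  shows "n = n' \<and> m = m'"
proof -
  have p0: "p > 0" using pr prime_gt_0_nat by blast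
  have nd: "\<not> p dvd n" "\<not> p dvd n'" using n n' by (auto simp: J_def)
  have "m = m'"
  proof (rule ccontr)
    assume "m \<noteq> m'"
    then consider "m < m'" | "m' < m" by linarith
    then show False
    proof cases
      case 1
      then have "p ^ m' = p ^ (m' - m) * p ^ m" by (simp add: power_add[symmetric])
      with eq have "n * p ^ m = (n' * p ^ (m' - m)) * p ^ m" by (metis mult.assoc)
      then have "n = n' * p ^ (m' - m)" using p0 by simp
      then have "p dvd n" using 1 by (simp add: dvd_power)
      with nd show False by simp
    next
      case 2
      then have "p ^ m = p ^ (m - m') * p ^ m'" by (simp add: power_add[symmetric])
      with eq have "n' * p ^ m' = (n * p ^ (m - m')) * p ^ m'" by (metis mult.assoc)
      then have "n' = n * p ^ (m - m')" using p0 by simp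
      then have "p dvd n'" using 2 by (simp add: dvd_power)
      with nd show False by simp
    qed
  qed
  with eq p0 show ?thesis by simp
qed

lemma g_at:
  assumes pr: "prime p" and n: "n \<in> J p"
  shows "g_minus p lam (- int (n * p ^ m)) = - of_nat n * phantom p (lam n) m"
proof -
  have "{(n', m'). n' \<in> J p \<and> int (n' * p ^ m') = - (- int (n * p ^ m))} = {(n, m)}"
  proof (intro set_eqI iffI)
    fix x assume "x \<in> {(n', m'). n' \<in> J p \<and> int (n' * p ^ m') = - (- int (n * p ^ m))}"
    then obtain a b where x: "x = (a, b)" "a \<in> J p" "int (a * p ^ b) = int (n * p ^ m)" by auto
    then have "a * p ^ b = n * p ^ m" using of_nat_eq_iff by blast
    then have "n = a \<and> m = b" using decomp_unique[OF pr n x(2)] by metis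
    then show "x \<in> {(n, m)}" using x by simp
  next
    fix x assume "x \<in> {(n, m)}"
    then show "x \<in> {(n', m'). n' \<in> J p \<and> int (n' * p ^ m') = - (- int (n * p ^ m))}"
      using n by simp
  qed
  then show ?thesis unfolding g_minus_def by simp
qed

lemma g_other:
  assumes "\<not> (\<exists>n m. n \<in> J p \<and> i = - int (n * p ^ m))"
  shows "g_minus p lam i = 0"
proof -
  have e: "{(n', m'). n' \<in> J p \<and> int (n' * p ^ m') = - i} = {}"
    using assms by (auto simp del: of_nat_mult) (metis minus_minus)
  show ?thesis unfolding g_minus_def e by simp
qed


lemma termle:
  fixes a x :: real
  assumes "0 \<le> a" "a \<le> 1" "0 \<le> x" "x \<le> 1" "1 \<le> k"
  shows "a ^ i * x ^ k \<le> x"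
proof -
  have "x ^ k \<le> x ^ 1" by (rule power_decreasing[OF assms(5) assms(3) assms(4)])
  moreover have "a ^ i \<le> 1" using assms(1,2) by (rule power_le_one)
  moreover have "0 \<le> x ^ k" using assms(3) by simp
  ultimately have "a ^ i * x ^ k \<le> 1 * x ^ k" by (intro mult_right_mono) auto
  with \<open>x ^ k \<le> x ^ 1\<close> show ?thesis by simp
qed


lemma mul_lt1: "(a::real) \<le> 1 \<Longrightarrow> 0 \<le> x \<Longrightarrow> x < c \<Longrightarrow> a * x < c"
proof -
  assume a: "a \<le> 1" "0 \<le> x" "x < c"
  have "a * x \<le> 1 * x" using mult_right_mono[OF a(1) a(2)] .
  then show ?thesis using a(3) by simp
qed
lemma mul_lt2: "(a::real) < c \<Longrightarrow> x \<le> 1 \<Longrightarrow> 0 \<le> x \<Longrightarrow> 0 \<le> a \<Longrightarrow> a * x < c"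
proof -
  assume a: "a < c" "x \<le> 1" "0 \<le> x" "0 \<le> a"
  have "a * x \<le> a * 1" using mult_left_mono[OF a(2) a(4)] .
  then show ?thesis using a(1) by simp
qed

lemma pow_ge_self: assumes "2 \<le> (p::nat)" shows "k \<le> p ^ k"
proof -
  have "k < 2 ^ k" by (rule less_exp)
  also have "(2::nat) ^ k \<le> p ^ k" using assms by (rule power_mono) simp
  finally show ?thesis by simp
qed

theorem proposition2p2p3:
  fixes av :: "'a::field_char_0 \<Rightarrow> real" and p :: nat
    and lam :: "nat \<Rightarrow> nat \<Rightarrow> 'a"
  assumes "valued_field_setup av p"
    and "\<forall>n\<in>J p. lam n \<in> witt_OK av"
  shows "g_minus p lam \<in> E_K av \<longleftrightarrow>
           ((\<forall>n\<in>J p. \<forall>m. av (lam n m) < 1) \<and>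
            (\<forall>m. \<forall>e>0. \<exists>N. \<forall>n\<in>J p. N \<le> n \<longrightarrow> av (lam n m) < e))"
proof -
  have na: "nonarch_abs av" and pr: "prime p" and ap: "av (of_nat p :: 'a) < 1"
    using assms(1) by (auto simp: valued_field_setup_def)
  have p2: "2 \<le> p" using pr prime_ge_2_nat by blast
  have ap0: "0 < av (of_nat p :: 'a)"
  proof -
    have "(of_nat p :: 'a) \<noteq> 0" using p2 by simp
    then have "av (of_nat p :: 'a) \<noteq> 0" using na_eq0[OF na] by blast
    then show ?thesis using na_nonneg[OF na, of "of_nat p"] by linarith
  qed
  have ap1: "av (of_nat p :: 'a) \<le> 1" using ap by simp
  have avn: "\<And>n. n \<in> J p \<Longrightarrow> av (of_nat n :: 'a) = 1"
    using na_coprime[OF assms(1)] by (auto simp: J_def)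
  have wit: "\<And>n i. n \<in> J p \<Longrightarrow> av (lam n i) \<le> 1"
    using assms(2) by (auto simp: witt_OK_def)
  have trm: "\<And>n i k. av (of_nat (p ^ i) * lam n i ^ k) = av (of_nat p :: 'a) ^ i * av (lam n i) ^ k"
    by (simp add: na_mult[OF na] na_power[OF na])
  have gat: "\<And>n m. n \<in> J p \<Longrightarrow> av (g_minus p lam (- int (n * p ^ m))) = av (phantom p (lam n) m)"
  proof -
    fix n m assume n: "n \<in> J p"
    show "av (g_minus p lam (- int (n * p ^ m))) = av (phantom p (lam n) m)"
      unfolding g_at[OF pr n] na_mult[OF na] na_minus[OF na] avn[OF n] by simp
  qed
  have trmle: "\<And>n i k. n \<in> J p \<Longrightarrow> 1 \<le> k \<Longrightarrow>
      av (of_nat (p ^ i) * lam n i ^ k) \<le> av (lam n i)"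
    unfolding trm using termle ap1 ap0 wit na_nonneg[OF na] by (simp add: less_imp_le)
  have k1: "\<And>k. 1 \<le> p ^ k" using p2 by simp
  show ?thesis
  proof
    assume g: "g_minus p lam \<in> E_K av"
    have tail: "\<exists>M. \<forall>n\<in>J p. \<forall>m. M \<le> n * p ^ m \<longrightarrow> av (phantom p (lam n) m) < e"
      if e: "e > 0" for e
    proof -
      from g e obtain N :: int where N: "\<forall>i\<le>N. av (g_minus p lam i) < e"
        by (auto simp: E_K_def)
      show ?thesis
      proof (intro exI[of _ "nat (- N)"] ballI allI impI)
        fix n m assume n: "n \<in> J p" and M: "nat (- N) \<le> n * p ^ m"
        have "int (nat (- N)) \<le> int (n * p ^ m)" using M by (simp only: of_nat_le_iff)
        moreover have "- N \<le> int (nat (- N))" by simp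
        ultimately have "- int (n * p ^ m) \<le> N" by linarith
        then show "av (phantom p (lam n) m) < e" using N gat[OF n] by metis
      qed
    qed
    have lim: "\<forall>e>0. \<exists>N. \<forall>n\<in>J p. N \<le> n \<longrightarrow> av (lam n m) < e" for m
    proof (induction m rule: less_induct)
      case (less m)
      show ?case
      proof (intro allI impI)
        fix e :: real assume e: "e > 0"
        define c where "c = e * av (of_nat p :: 'a) ^ m"
        have c: "c > 0" using e ap0 by (simp add: c_def)
        have ev: "\<forall>i\<in>{..<m}. eventually (\<lambda>N. \<forall>n\<in>J p. N \<le> n \<longrightarrow> av (lam n i) < c) sequentially"
        proof
          fix i assume "i \<in> {..<m}"
          then have "\<forall>e>0. \<exists>N. \<forall>n\<in>J p. N \<le> n \<longrightarrow> av (lam n i) < e" using less by simp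
          then obtain N where "\<forall>n\<in>J p. N \<le> n \<longrightarrow> av (lam n i) < c" using c by blast
          then show "eventually (\<lambda>N. \<forall>n\<in>J p. N \<le> n \<longrightarrow> av (lam n i) < c) sequentially"
            unfolding eventually_sequentially by (meson order_trans)
        qed
        from eventually_ball_finite[OF _ ev] obtain N1 where
          N1: "\<forall>i<m. \<forall>n\<in>J p. N1 \<le> n \<longrightarrow> av (lam n i) < c"
          unfolding eventually_sequentially by auto
        obtain M where M: "\<forall>n\<in>J p. \<forall>m. M \<le> n * p ^ m \<longrightarrow> av (phantom p (lam n) m) < c"
          using tail[OF c] by auto
        show "\<exists>N. \<forall>n\<in>J p. N \<le> n \<longrightarrow> av (lam n m) < e"
        proof (intro exI[of _ "max N1 M"] ballI impI)
          fix n assume n: "n \<in> J p" and nN: "max N1 M \<le> n"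
          have nn: "n \<le> n * p ^ m" using k1[of m] by simp
          have "M \<le> n * p ^ m" using nN nn by (meson max.boundedE order_trans)
          then have ph: "av (phantom p (lam n) m) < c" using M n by blast
          define f where "f i = of_nat (p ^ i) * lam n i ^ (p ^ (m - i))" for i
          have rest: "av (\<Sum>i<m. f i) < c"
          proof (rule na_sum_less[OF na _ c], simp, intro ballI)
            fix i assume "i \<in> {..<m}"
            then have "av (lam n i) < c" using N1 n nN by auto
            then show "av (f i) < c" unfolding f_def using trmle[OF n k1] by (meson le_less_trans)
          qed
          have "phantom p (lam n) m = (\<Sum>i<Suc m. f i)"
            unfolding phantom_def f_def lessThan_Suc_atMost ..
          then have "phantom p (lam n) m = (\<Sum>i<m. f i) + of_nat (p ^ m) * lam n m"
            by (simp add: f_def)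
          then have "of_nat (p ^ m) * lam n m = phantom p (lam n) m - (\<Sum>i<m. f i)" by simp
          then have "av (of_nat (p ^ m) * lam n m) \<le> max (av (phantom p (lam n) m)) (av (\<Sum>i<m. f i))"
            using na_diff[OF na] by metis
          then have "av (of_nat p :: 'a) ^ m * av (lam n m) < e * av (of_nat p :: 'a) ^ m"
            using ph rest trm[of m n 1] unfolding c_def by simp
          then show "av (lam n m) < e" using ap0 by (simp add: mult.commute)
        qed
      qed
    qed
    have lt1: "av (lam n k) < 1" if n: "n \<in> J p" for n k
    proof (rule ccontr)
      assume nk: "\<not> av (lam n k) < 1"
      define k0 where "k0 = (LEAST k. \<not> av (lam n k) < 1)"
      have k0: "\<not> av (lam n k0) < 1" using nk unfolding k0_def by (rule LeastI)
      have below: "av (lam n i) < 1" if "i < k0" for i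
        using not_less_Least[of i "\<lambda>k. \<not> av (lam n k) < 1"] that unfolding k0_def by blast
      have k01: "av (lam n k0) = 1" using k0 wit[OF n, of k0] by linarith
      define c where "c = av (of_nat p :: 'a) ^ k0"
      have c: "0 < c" using ap0 by (simp add: c_def)
      obtain M where M: "\<forall>n\<in>J p. \<forall>m. M \<le> n * p ^ m \<longrightarrow> av (phantom p (lam n) m) < c"
        using tail[OF c] by auto
      have ev: "\<forall>i\<in>{..<k0}. eventually (\<lambda>j. av (lam n i) ^ j < c) sequentially"
      proof
        fix i assume "i \<in> {..<k0}"
        then have "av (lam n i) < 1" using below by simp
        then have "(\<lambda>j. av (lam n i) ^ j) \<longlonglongrightarrow> 0"
          using LIMSEQ_realpow_zero na_nonneg[OF na] by blast
        then show "eventually (\<lambda>j. av (lam n i) ^ j < c) sequentially"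
          using order_tendstoD(2) c by blast
      qed
      from eventually_ball_finite[OF _ ev] obtain K where
        K: "\<forall>j\<ge>K. \<forall>i<k0. av (lam n i) ^ j < c"
        unfolding eventually_sequentially by auto
      define m where "m = M + K + k0"
      have "n \<ge> 1" using n by (simp add: J_def)
      then have "m \<le> n * p ^ m" using pow_ge_self[OF p2, of m]
        by (metis mult_1 mult_le_mono1 order_trans)
      then have ph: "av (phantom p (lam n) m) < c" using M n unfolding m_def by auto
      define f where "f i = of_nat (p ^ i) * lam n i ^ (p ^ (m - i))" for i
      have km: "k0 \<in> {..m}" unfolding m_def by simp
      have split: "phantom p (lam n) m = f k0 + sum f ({..m} - {k0})"
        unfolding phantom_def f_def[symmetric] using sum.remove[OF _ km] by simp
      have fk: "av (f k0) = c" unfolding f_def trm k01 c_def by simp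
      have rest: "av (sum f ({..m} - {k0})) < c"
      proof (rule na_sum_less[OF na _ c], simp, intro ballI)
        fix i assume i: "i \<in> {..m} - {k0}"
        show "av (f i) < c"
        proof (cases "i < k0")
          case True
          have "K \<le> m - i" unfolding m_def using True by simp
          also have "m - i \<le> p ^ (m - i)" by (rule pow_ge_self[OF p2])
          finally have "av (lam n i) ^ (p ^ (m - i)) < c" using K True by auto
          moreover have "av (of_nat p :: 'a) ^ i \<le> 1" using ap0 ap1 by (simp add: power_le_one)
          moreover have "0 \<le> av (lam n i) ^ (p ^ (m - i))" using na_nonneg[OF na] by simp
          ultimately have "av (of_nat p :: 'a) ^ i * av (lam n i) ^ (p ^ (m - i)) < c"
            by (rule mul_lt1[rotated 2])
          then show ?thesis unfolding f_def trm .
        next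
          case False
          then have "k0 < i" using i by auto
          then have "av (of_nat p :: 'a) ^ i < c"
            unfolding c_def using ap0 ap by (simp add: power_strict_decreasing)
          moreover have "av (lam n i) ^ (p ^ (m - i)) \<le> 1"
            using wit[OF n] na_nonneg[OF na] by (simp add: power_le_one)
          moreover have "0 \<le> av (lam n i) ^ (p ^ (m - i))" using na_nonneg[OF na] by simp
          moreover have "0 \<le> av (of_nat p :: 'a) ^ i" using ap0 by simp
          ultimately have "av (of_nat p :: 'a) ^ i * av (lam n i) ^ (p ^ (m - i)) < c"
            by (rule mul_lt2)
          then show ?thesis unfolding f_def trm .
        qed
      qed
      have "av (phantom p (lam n) m) = c"
        unfolding split using na_add_eq[OF na] rest fk by simp
      with ph show False by simp
    qed
    show "(\<forall>n\<in>J p. \<forall>m. av (lam n m) < 1) \<and>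
            (\<forall>m. \<forall>e>0. \<exists>N. \<forall>n\<in>J p. N \<le> n \<longrightarrow> av (lam n m) < e)"
      using lt1 lim by blast
  next
    assume H: "(\<forall>n\<in>J p. \<forall>m. av (lam n m) < 1) \<and>
            (\<forall>m. \<forall>e>0. \<exists>N. \<forall>n\<in>J p. N \<le> n \<longrightarrow> av (lam n m) < e)"
    have phb: "av (phantom p (lam n) m) \<le> 1" if n: "n \<in> J p" for n m
      unfolding phantom_def
      by (rule na_sum_le[OF na]) (use trmle[OF n k1] wit[OF n] in \<open>auto intro: order_trans\<close>)
    have bdd: "av (g_minus p lam i) \<le> 1" for i
    proof (cases "\<exists>n m. n \<in> J p \<and> i = - int (n * p ^ m)")
      case True
      then obtain n m where "n \<in> J p" "i = - int (n * p ^ m)" by blast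
      then show ?thesis using gat phb by simp
    next
      case False
      have z: "g_minus p lam i = 0" using g_other[OF False] .
      have "av 0 = 0" using na_eq0[OF na, of 0] by simp
      then show ?thesis unfolding z by simp
    qed
    have key: "\<exists>M. \<forall>n\<in>J p. \<forall>m. M \<le> n * p ^ m \<longrightarrow> av (phantom p (lam n) m) < e"
      if e: "e > 0" for e
    proof -
      have "(\<lambda>j. av (of_nat p :: 'a) ^ j) \<longlonglongrightarrow> 0"
        using LIMSEQ_realpow_zero ap0 ap by (simp add: less_imp_le)
      then obtain I where I: "av (of_nat p :: 'a) ^ I < e"
        using order_tendstoD(2)[OF _ e] eventually_sequentially by (metis order_refl)
      have ev1: "\<forall>i\<in>{..<I}. eventually (\<lambda>N. \<forall>n\<in>J p. N \<le> n \<longrightarrow> av (lam n i) < e) sequentially"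
      proof
        fix i assume "i \<in> {..<I}"
        obtain N where "\<forall>n\<in>J p. N \<le> n \<longrightarrow> av (lam n i) < e" using H e by blast
        then show "eventually (\<lambda>N. \<forall>n\<in>J p. N \<le> n \<longrightarrow> av (lam n i) < e) sequentially"
          unfolding eventually_sequentially by (meson order_trans)
      qed
      from eventually_ball_finite[OF _ ev1] obtain N0 where
        N0: "\<forall>i<I. \<forall>n\<in>J p. N0 \<le> n \<longrightarrow> av (lam n i) < e"
        unfolding eventually_sequentially by auto
      define S where "S = {..<N0} \<times> {..<I}"
      have ev2: "\<forall>q\<in>S. eventually (\<lambda>j. fst q \<in> J p \<longrightarrow> av (lam (fst q) (snd q)) ^ j < e) sequentially"
      proof
        fix q assume "q \<in> S"
        show "eventually (\<lambda>j. fst q \<in> J p \<longrightarrow> av (lam (fst q) (snd q)) ^ j < e) sequentially"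
        proof (cases "fst q \<in> J p")
          case True
          then have "av (lam (fst q) (snd q)) < 1" using H by blast
          then have "(\<lambda>j. av (lam (fst q) (snd q)) ^ j) \<longlonglongrightarrow> 0"
            using LIMSEQ_realpow_zero na_nonneg[OF na] by blast
          then have "eventually (\<lambda>j. av (lam (fst q) (snd q)) ^ j < e) sequentially"
            using order_tendstoD(2) e by blast
          then show ?thesis by (rule eventually_mono) simp
        next
          case False
          then show ?thesis by simp
        qed
      qed
      have "finite S" unfolding S_def by simp
      from eventually_ball_finite[OF this ev2] obtain K where
        K: "\<forall>j\<ge>K. \<forall>q\<in>S. fst q \<in> J p \<longrightarrow> av (lam (fst q) (snd q)) ^ j < e"
        unfolding eventually_sequentially by auto
      define M0 where "M0 = K + I"
      show ?thesis
      proof (intro exI[of _ "N0 * p ^ M0"] ballI allI impI)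
        fix n m assume n: "n \<in> J p" and nm: "N0 * p ^ M0 \<le> n * p ^ m"
        have alt: "N0 \<le> n \<or> M0 \<le> m"
        proof (rule ccontr)
          assume "\<not> (N0 \<le> n \<or> M0 \<le> m)"
          then have a: "n < N0" "m < M0" by auto
          have "n * p ^ m < N0 * p ^ m" using a(1) p2 by simp
          also have "\<dots> \<le> N0 * p ^ M0" using a(2) p2 by (simp add: power_increasing)
          finally show False using nm by simp
        qed
        show "av (phantom p (lam n) m) < e"
          unfolding phantom_def
        proof (rule na_sum_less[OF na _ e], simp, intro ballI)
          fix i assume i: "i \<in> {..m}"
          show "av (of_nat (p ^ i) * lam n i ^ p ^ (m - i)) < e"
          proof (cases "I \<le> i")
            case True
            have "av (of_nat p :: 'a) ^ i \<le> av (of_nat p :: 'a) ^ I"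
              using True ap0 ap1 by (simp add: power_decreasing)
            then have "av (of_nat p :: 'a) ^ i < e" using I by linarith
            moreover have "av (lam n i) ^ (p ^ (m - i)) \<le> 1"
              using wit[OF n] na_nonneg[OF na] by (simp add: power_le_one)
            moreover have "0 \<le> av (lam n i) ^ (p ^ (m - i))" using na_nonneg[OF na] by simp
            moreover have "0 \<le> av (of_nat p :: 'a) ^ i" using ap0 by simp
            ultimately have "av (of_nat p :: 'a) ^ i * av (lam n i) ^ (p ^ (m - i)) < e"
              by (rule mul_lt2)
            then show ?thesis unfolding trm .
          next
            case False
            show ?thesis
            proof (cases "N0 \<le> n")
              case True
              then have "av (lam n i) < e" using N0 False n by auto
              then show ?thesis using trmle[OF n k1] by (meson le_less_trans)
            next
              case nN: False
              then have "M0 \<le> m" using alt by simp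
              then have "K \<le> m - i" using False unfolding M0_def by simp
              also have "m - i \<le> p ^ (m - i)" by (rule pow_ge_self[OF p2])
              finally have kk: "K \<le> p ^ (m - i)" .
              have "(n, i) \<in> S" using nN False unfolding S_def by simp
              then have "av (lam n i) ^ (p ^ (m - i)) < e" using K kk n by fastforce
              moreover have "av (of_nat p :: 'a) ^ i \<le> 1" using ap0 ap1 by (simp add: power_le_one)
              moreover have "0 \<le> av (lam n i) ^ (p ^ (m - i))" using na_nonneg[OF na] by simp
              ultimately have "av (of_nat p :: 'a) ^ i * av (lam n i) ^ (p ^ (m - i)) < e"
                by (rule mul_lt1[rotated 2])
              then show ?thesis unfolding trm .
            qed
          qed
        qed
      qed
    qed
    show "g_minus p lam \<in> E_K av"
      unfolding E_K_def
    proof (intro CollectI conjI allI impI)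
      show "bdd_above (range (\<lambda>i. av (g_minus p lam i)))"
        by (rule bdd_aboveI2) (rule bdd)
    next
      fix e :: real assume e: "e > 0"
      obtain M where M: "\<forall>n\<in>J p. \<forall>m. M \<le> n * p ^ m \<longrightarrow> av (phantom p (lam n) m) < e"
        using key[OF e] by blast
      show "\<exists>N. \<forall>i. i \<le> N \<longrightarrow> av (g_minus p lam i) < e"
      proof (intro exI[of _ "- int M"] allI impI)
        fix i assume i: "i \<le> - int M"
        show "av (g_minus p lam i) < e"
        proof (cases "\<exists>n m. n \<in> J p \<and> i = - int (n * p ^ m)")
          case True
          then obtain n m where n: "n \<in> J p" and im: "i = - int (n * p ^ m)" by blast
          then have "int M \<le> int (n * p ^ m)" using i by linarith
          then have "M \<le> n * p ^ m" by (simp only: of_nat_le_iff)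
          then show ?thesis using M n gat[OF n] im by simp
        next
          case False
          have z: "g_minus p lam i = 0" using g_other[OF False] .
          have "av 0 = 0" using na_eq0[OF na, of 0] by simp
          then show ?thesis unfolding z using e by simp
        qed
      qed
    qed
  qed
qed

end
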